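(* Let $k\ge 2$ and let $\overline{x}\in\Sigma_k^*$ be a fixed point of $\mathcal P_k$. Let $b_1>b_2>\dots>b_r$ be the letters occurring in $\overline{x}$, and for $1\le j\le r$ let $n_j=\lfloor \log_k |\overline{x}|_{b_j}\rfloor$, so that $n_j+1$ is the number of base-$k$ digits of $|\overline{x}|_{b_j}$ (equivalently, $\overline{x}=A_1b_1A_2b_2\cdots A_rb_r$ where $A_j=[|\overline x|_{b_j}]_k$ is a word of length $n_j+1$ whose first letter is nonzero). Then \[\sum_{j=1}^{r} n_j\;\ge\;\sum_{j=1}^{r}k^{n_j}-2r.\]
   Context: Fix an integer $k\ge 2$ and the alphabet $\Sigma_k=\{0,1,\dots,k-1\}$. A word is a finite nonempty string of letters of $\Sigma_k$ (leading zeros allowed); $\Sigma_k^*$ denotes the set of words. For a word $x$, $|x|$ denotes its length and $|x|_i$ the number of occurrences of the letter $i$ in $x$. For a positive integer $c$, $[c]_k$ denotes its standard base-$k$ representation without leading zeros, viewed as a word over $\Sigma_k$; it has $\lfloor\log_k c\rfloor+1$ letters. The map $\mathcal P_k:\Sigma_k^*\to\Sigma_k^*$ is defined as follows: if $b_1>b_2>\dots>b_r$ are exactly the letters occurring in $x$ (i.e. those with $|x|_{b_j}\neq 0$), then $\mathcal P_k(x)=[|x|_{b_1}]_k\,b_1\,[|x|_{b_2}]_k\,b_2\cdots[|x|_{b_r}]_k\,b_r$ (concatenation). A fixed point is a word $x$ with $\mathcal P_k(x)=x$. *)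

theory Defs
  imports Complex_Main "HOL-Library.Multiset"
begin

definition is_word :: "nat \<Rightarrow> nat list \<Rightarrow> bool" where
  "is_word k x \<longleftrightarrow> x \<noteq> [] \<and> (\<forall>a\<in>set x. a < k)"

text \<open>Standard base-k representation of a positive integer (most significant digit first,
  no leading zeros).\<close>
fun base_repr :: "nat \<Rightarrow> nat \<Rightarrow> nat list" where
  "base_repr k c = (if k < 2 \<or> c < k then [c] else base_repr k (c div k) @ [c mod k])"

definition Pk :: "nat \<Rightarrow> nat list \<Rightarrow> nat list" where
  "Pk k x = concat (map (\<lambda>b. base_repr k (count_list x b) @ [b])
                        (rev (sorted_list_of_set (set x))))"

end

theory Submission
  imports Defs
begin

lemma br_len:
  assumes "k \<ge> 2" "c > 0"
  shows "length (base_repr k c) \<ge> 1 \<and> k ^ (length (base_repr k c) - 1) \<le> c \<and> c < k ^ length (base_repr k c)"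
  using assms
proof (induction k c rule: base_repr.induct)
  case (1 k c)
  show ?case
  proof (cases "c < k")
    case True
    then show ?thesis using 1 by simp
  next
    case False
    then have d: "c div k > 0" using 1 by (simp add: div_greater_zero_iff)
    have eq: "base_repr k c = base_repr k (c div k) @ [c mod k]" using False 1 by simp
    from 1(1)[OF _ 1(2) d] False 1(2)
    have ih: "length (base_repr k (c div k)) \<ge> 1" "k ^ (length (base_repr k (c div k)) - 1) \<le> c div k"
      "c div k < k ^ length (base_repr k (c div k))" by auto
    define L where "L = length (base_repr k (c div k))"
    have "k ^ L \<le> c"
    proof -
      have "k ^ L = k * k ^ (L - 1)" using ih(1) L_def by (cases L) auto
      also have "\<dots> \<le> k * (c div k)" using ih(2) L_def by simp
      also have "\<dots> \<le> c" by simp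
      finally show ?thesis .
    qed
    moreover have "c < k ^ Suc L"
    proof -
      have "c div k + 1 \<le> k ^ L" using ih(3) L_def by simp
      hence "k * (c div k + 1) \<le> k * k ^ L" by (rule mult_le_mono2)
      hence "k * (c div k) + k \<le> k * k ^ L" by (simp add: algebra_simps)
      moreover have "c < k * (c div k) + k"
      proof -
        have "c mod k < k" using 1(2) by simp
        moreover have "c = k * (c div k) + c mod k" by simp
        ultimately show ?thesis by linarith
      qed
      ultimately show ?thesis by simp
    qed
    ultimately show ?thesis using eq L_def by simp
  qed
qed

lemma br_floor:
  assumes "k \<ge> 2" "c > 0"
  shows "\<lfloor>log (real k) (real c)\<rfloor> = int (length (base_repr k c)) - 1"
proof -
  define L where "L = length (base_repr k c)"
  have h: "L \<ge> 1" "k ^ (L - 1) \<le> c" "c < k ^ (L - 1 + 1)" using br_len[OF assms] L_def by auto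
  have "\<lfloor>log (real k) (real c)\<rfloor> = int (L - 1)"
    using floor_log_nat_eq_powr_iff[OF assms(1) assms(2), of "L - 1"] h by simp
  thus ?thesis using h(1) L_def by simp
qed

theorem theorem2:
  fixes k :: nat and x :: "nat list"
  assumes "k \<ge> 2"
    and "is_word k x"
    and "Pk k x = x"
  shows "(\<Sum>b\<in>set x. \<lfloor>log (real k) (real (count_list x b))\<rfloor>)
           \<ge> (\<Sum>b\<in>set x. (int k) ^ nat \<lfloor>log (real k) (real (count_list x b))\<rfloor>)
              - 2 * int (card (set x))"
proof -
  define F where "F b = \<lfloor>log (real k) (real (count_list x b))\<rfloor>" for b
  have pos: "b \<in> set x \<Longrightarrow> count_list x b > 0" for b using count_list_0_iff[of x b] by (simp only: neq0_conv[symmetric]) blast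
  have Fe: "b \<in> set x \<Longrightarrow> F b = int (length (base_repr k (count_list x b))) - 1" for b
    using br_floor[OF assms(1) pos] F_def by simp
  have Fn: "b \<in> set x \<Longrightarrow> F b \<ge> 0" for b using Fe br_len[OF assms(1) pos] by fastforce
  have le: "b \<in> set x \<Longrightarrow> int k ^ nat (F b) \<le> int (count_list x b)" for b
  proof -
    assume b: "b \<in> set x"
    have "k ^ nat (F b) \<le> count_list x b"
    proof -
      have "nat (F b) = length (base_repr k (count_list x b)) - 1" using Fe[OF b] by simp
      thus ?thesis using br_len[OF assms(1) pos[OF b]] by simp
    qed
    hence "int (k ^ nat (F b)) \<le> int (count_list x b)" by (simp only: of_nat_le_iff)
    thus ?thesis by simp
  qed
  have "length x = length (Pk k x)" using assms(3) by simp
  also have "\<dots> = (\<Sum>b\<in>set x. length (base_repr k (count_list x b)) + 1)"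
    unfolding Pk_def length_concat
    by (simp add: sum_list_distinct_conv_sum_set comp_def)
  finally have l1: "int (length x) = (\<Sum>b\<in>set x. F b + 2)"
    using Fe by (simp add: of_nat_sum)
  have l2: "length x = (\<Sum>b\<in>set x. count_list x b)" using sum_count_set[of x "set x"] by simp
  have "(\<Sum>b\<in>set x. int k ^ nat (F b)) \<le> (\<Sum>b\<in>set x. int (count_list x b))"
    by (rule sum_mono) (rule le)
  also have "\<dots> = int (length x)" using l2 by (simp add: of_nat_sum)
  also have "\<dots> = (\<Sum>b\<in>set x. F b) + 2 * int (card (set x))" using l1 by (simp add: sum.distrib)
  finally show ?thesis unfolding F_def by simp
qed

end
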